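(* Let $\sigma_2:[n]\to\{\pm1\}$ be an extended string and $\sigma_1\preceq\sigma_2$ a sign string. Let $L^{\sigma_2}_{\sigma_1}\subset\mathbb{R}^n$ be the set of all $x=(x_1,\dots,x_n)$ such that $\sigma_2(k)x_k\le0$ and $|x_k|\le1$ for all $k\in[n]$, and such that, if $k_1<\dots<k_l$ are all the indices $k\in[n]$ with $x_k=0$, then $\sigma_1$ is the reduced string of $\tau:[l]\to\{\pm1\}$, $\tau(i)=\sigma_2(k_i)$. Then $L^{\sigma_2}_{\sigma_1}$ is contractible.
   Context: $[n]=\{1,\dots,n\}$; signs $\pm$ are identified with $\pm1$. An extended string is any function $\tau:[l]\to\{\pm1\}$ with $l\ge2$ (signs may repeat); its length is $|\tau|=l$. A sign string is an extended string whose consecutive values alternate (i.e. $\tau(j+1)=-\tau(j)$ for all $j$). For extended strings $\tau_1:[l_1]\to\{\pm1\}$, $\tau_2:[l_2]\to\{\pm1\}$, $\tau_1\preceq\tau_2$ ($\tau_1$ is a substring of $\tau_2$) if $\tau_1=\tau_2\circ f$ for some strictly increasing $f:[l_1]\to[l_2]$; $\tau_1\prec\tau_2$ if moreover $\tau_1\ne\tau_2$. The reduced string of an extended string $\tau$ is the unique sign string of maximal length which is a substring of $\tau$ (obtained by deleting repetitions of consecutive equal signs). When $l<2$ the condition "$\sigma_1$ is the reduced string of $\tau$" is understood to fail. *)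

theory Defs
  imports "HOL-Analysis.Analysis" "HOL-Library.Sublist"
begin

text \<open>Strings are represented as integer lists (position j+1 of the paper is index j).
  Substring relation = subseq (embedding via strictly increasing index map).\<close>

definition ext_string :: "int list \<Rightarrow> bool" where
  "ext_string s \<longleftrightarrow> length s \<ge> 2 \<and> set s \<subseteq> {-1, 1}"

definition sign_string :: "int list \<Rightarrow> bool" where
  "sign_string s \<longleftrightarrow> ext_string s \<and> (\<forall>j. Suc j < length s \<longrightarrow> s ! Suc j = - (s ! j))"

definition reduced_string :: "int list \<Rightarrow> int list \<Rightarrow> bool" where
  "reduced_string s t \<longleftrightarrow> ext_string t \<and> sign_string s \<and> subseq s t \<and>
     (\<forall>s'. sign_string s' \<and> subseq s' t \<longrightarrow> length s' \<le> length s)"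

end

theory Submission
  imports Defs
begin

lemma len_remdups_Cons:
  "length (remdups_adj (a # t)) = length (remdups_adj t) + (if t \<noteq> [] \<and> hd t = a then 0 else 1)"
  by (cases t) auto

lemma remdups_subseq_len:
  "subseq s t \<Longrightarrow> length (remdups_adj s) \<le> length (remdups_adj t) \<and>
     (s \<noteq> [] \<and> hd s \<noteq> hd t \<longrightarrow> length (remdups_adj s) < length (remdups_adj t))"
proof (induction t arbitrary: s)
  case Nil
  then show ?case by simp
next
  case (Cons a t)
  show ?case
  proof (cases "subseq s t")
    case True
    from Cons.IH[OF True] show ?thesis
      using True by (cases "t = []") (auto simp: len_remdups_Cons)
  next
    case False
    then obtain s' where s: "s = a # s'" and s': "subseq s' t"
      using Cons.prems by (cases s) (auto split: if_splits)
    from Cons.IH[OF s'] show ?thesis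
      unfolding s using s' by (cases "s' = []"; cases "t = []") (auto simp: len_remdups_Cons)
  qed
qed

lemma subseq_remdups_adj: "subseq (remdups_adj t) t"
  by (induction t rule: remdups_adj.induct) auto

lemma alt_nth:
  assumes "set s \<subseteq> {-1, 1::int}" "\<And>j. Suc j < length s \<Longrightarrow> s ! Suc j = - (s ! j)"
  shows "j < length s \<Longrightarrow> s ! j = hd s * (-1) ^ j"
proof (induction j)
  case 0 then show ?case by (cases s) auto
next
  case (Suc j) then show ?case using assms(2)[of j] by auto
qed

lemma remdups_alt:
  assumes "set t \<subseteq> {-1, 1::int}" "Suc j < length (remdups_adj t)"
  shows "remdups_adj t ! Suc j = - (remdups_adj t ! j)"
proof -
  have "remdups_adj t ! Suc j \<in> set t" "remdups_adj t ! j \<in> set t"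
    using assms(2) by (metis Suc_lessD nth_mem remdups_adj_set)+
  then have "remdups_adj t ! Suc j \<in> {-1,1}" "remdups_adj t ! j \<in> {-1,1}" using assms(1) by auto
  then show ?thesis using remdups_adj_adjacent[OF assms(2)] by auto
qed

lemma alt_eq:
  assumes "set s \<subseteq> {-1, 1::int}" "\<And>j. Suc j < length s \<Longrightarrow> s ! Suc j = - (s ! j)"
    "set r \<subseteq> {-1, 1::int}" "\<And>j. Suc j < length r \<Longrightarrow> r ! Suc j = - (r ! j)"
    "length s = length r" "hd s = hd r"
  shows "s = r"
proof (rule nth_equalityI)
  show "length s = length r" by (rule assms(5))
next
  fix j assume j: "j < length s"
  have "s ! j = hd s * (-1) ^ j" using alt_nth[OF assms(1,2) j] .
  moreover have "r ! j = hd r * (-1) ^ j" using alt_nth[OF assms(3,4)] j assms(5) by simp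
  ultimately show "s ! j = r ! j" using assms(6) by simp
qed

lemma sign_string_distinct_adj:
  assumes "sign_string s" shows "distinct_adj s"
  unfolding distinct_adj_conv_nth
proof (intro allI impI)
  fix i assume i: "Suc i < length s"
  have "s ! i \<in> {-1,1}" using assms i unfolding sign_string_def ext_string_def
    by (meson Suc_lessD nth_mem subsetD)
  then show "s ! i \<noteq> s ! Suc i" using assms i unfolding sign_string_def by auto
qed

lemma reduced_iff:
  assumes t: "set t \<subseteq> {-1, 1::int}" and s: "sign_string s"
  shows "reduced_string s t \<longleftrightarrow> remdups_adj t = s"
proof
  assume r: "remdups_adj t = s"
  have "length t \<ge> 2" using s remdups_adj_length[of t] unfolding r[symmetric] sign_string_def ext_string_def by linarith
  moreover have "length s' \<le> length s" if "sign_string s'" "subseq s' t" for s'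
  proof -
    have "remdups_adj s' = s'" using sign_string_distinct_adj[OF that(1)] distinct_adj_altdef by blast
    then show ?thesis using remdups_subseq_len[OF that(2)] r by simp
  qed
  ultimately show "reduced_string s t"
    unfolding reduced_string_def ext_string_def using t s r subseq_remdups_adj by auto
next
  assume red: "reduced_string s t"
  let ?r = "remdups_adj t"
  have sub: "subseq s t" and ss: "sign_string s" using red unfolding reduced_string_def by auto
  have rs: "remdups_adj s = s" using sign_string_distinct_adj[OF ss] distinct_adj_altdef by blast
  have l1: "length s \<le> length ?r" using remdups_subseq_len[OF sub] rs by simp
  have s2: "length s \<ge> 2" using ss unfolding sign_string_def ext_string_def by auto
  have "sign_string ?r"
    unfolding sign_string_def ext_string_def using l1 s2 t remdups_alt[OF t] by auto
  then have l2: "length ?r \<le> length s" using red subseq_remdups_adj unfolding reduced_string_def by blast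
  have "s \<noteq> []" using s2 by auto
  then have "hd s = hd t" using remdups_subseq_len[OF sub] rs l2 by fastforce
  then show "?r = s"
    apply (intro alt_eq)
    using t ss remdups_alt[OF t] l1 l2 unfolding sign_string_def ext_string_def by auto
qed


lemma sls_eq: "sorted_wrt (<) l \<Longrightarrow> sorted_list_of_set (set l) = l"
  by (simp add: sorted_list_of_set_sort_remdups distinct_remdups_id sorted_sort_id strict_sorted_iff)

lemma subseq_map_ex: "subseq s (map g ys) \<Longrightarrow> \<exists>zs. subseq zs ys \<and> s = map g zs"
proof (induction ys arbitrary: s)
  case Nil then show ?case by auto
next
  case (Cons y ys)
  show ?case
  proof (cases "subseq s (map g ys)")
    case True then show ?thesis using Cons.IH by (metis list_emb_Cons)
  next
    case False
    then obtain s' where s: "s = g y # s'" "subseq s' (map g ys)"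
      using Cons.prems by (cases s) (auto split: if_splits)
    then obtain zs where "subseq zs ys" "s' = map g zs" using Cons.IH by blast
    then show ?thesis using s by (intro exI[of _ "y # zs"]) auto
  qed
qed

lemma subseq_sorted_wrt: "subseq xs ys \<Longrightarrow> sorted_wrt P ys \<Longrightarrow> sorted_wrt P xs"
  by (induction rule: list_emb.induct) (auto dest: list_emb_set)

lemma remdups_dup: "remdups_adj (xs @ a # a # zs) = remdups_adj (xs @ a # zs)"
proof -
  have "remdups_adj (a # a # zs) = remdups_adj (a # zs)" by simp
  then show ?thesis by (metis remdups_adj_append)
qed

lemma remdups_dups: "(\<forall>y\<in>set ws. y = a) \<Longrightarrow> remdups_adj (xs @ a # ws @ zs) = remdups_adj (xs @ a # zs)"
proof (induction ws)
  case Nil then show ?case by simp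
next
  case (Cons w ws)
  then show ?case using remdups_dup[of xs a "ws @ zs"] by simp
qed

lemma in_dropWhile_sorted:
  "sorted_wrt (<) ys \<Longrightarrow> (k \<in> set (dropWhile Q ys) \<longleftrightarrow> k \<in> set ys \<and> (\<exists>j\<in>set ys. j \<le> k \<and> \<not> Q j))"
  for ys :: "'a::linorder list"
proof (induction ys)
  case Nil then show ?case by simp
next
  case (Cons a ys)
  have lt: "\<forall>y\<in>set ys. a < y" and sw: "sorted_wrt (<) ys" using Cons.prems by auto
  show ?case
  proof (cases "Q a")
    case True
    have "k \<in> set (dropWhile Q ys) \<longleftrightarrow> k \<in> set (a#ys) \<and> (\<exists>j\<in>set (a#ys). j \<le> k \<and> \<not> Q j)"
    proof
      assume "k \<in> set (dropWhile Q ys)"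
      then show "k \<in> set (a#ys) \<and> (\<exists>j\<in>set (a#ys). j \<le> k \<and> \<not> Q j)"
        using Cons.IH[OF sw] by simp
    next
      assume h: "k \<in> set (a#ys) \<and> (\<exists>j\<in>set (a#ys). j \<le> k \<and> \<not> Q j)"
      then obtain j where j: "j \<in> set (a#ys)" "j \<le> k" "\<not> Q j" by blast
      then have jy: "j \<in> set ys" using True by auto
      then have "k \<noteq> a" using lt j(2) by (metis leD)
      then have "k \<in> set ys" using h by simp
      then show "k \<in> set (dropWhile Q ys)" using Cons.IH[OF sw] jy j by blast
    qed
    then show ?thesis using True by simp
  next
    case False
    then show ?thesis using lt by (auto intro: less_imp_le)
  qed
qed

lemma zero_mix:
  fixes a b s u :: real
  assumes "s * a \<le> 0" "s * b \<le> 0" "s \<noteq> 0" "0 < u" "u < 1"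
  shows "(1 - u) * a + u * b = 0 \<longleftrightarrow> a = 0 \<and> b = 0"
proof
  assume h: "(1 - u) * a + u * b = 0"
  have "(1 - u) * (s * a) + u * (s * b) = s * ((1 - u) * a + u * b)" by (simp add: algebra_simps)
  also have "\<dots> = 0" using h by simp
  finally have e: "(1 - u) * (s * a) + u * (s * b) = 0" .
  have n1: "(1 - u) * (s * a) \<le> 0" and n2: "u * (s * b) \<le> 0"
    using assms by (simp_all add: mult_nonneg_nonpos)
  from e n1 n2 have z1: "(1 - u) * (s * a) = 0" by linarith
  from e n1 n2 have z2: "u * (s * b) = 0" by linarith
  have "s * a = 0" using z1 assms(5) by simp
  moreover have "s * b = 0" using z2 assms(4) by simp
  ultimately show "a = 0 \<and> b = 0" using assms(3) by simp
qed simp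

lemma distinct_adj_take: "distinct_adj xs \<Longrightarrow> distinct_adj (take i xs)"
  by (simp add: distinct_adj_conv_nth)



locale L15 =
  fixes \<sigma>2 :: "'n::{finite,linorder} \<Rightarrow> int" and \<sigma>1 :: "int list"
  assumes sig: "\<And>k. \<sigma>2 k \<in> {-1, 1}"
    and ss: "sign_string \<sigma>1"
    and sub: "subseq \<sigma>1 (map \<sigma>2 (sorted_list_of_set (UNIV::'n set)))"
begin

definition Z :: "real^('n::{finite,linorder}) \<Rightarrow> 'n set" where "Z x = {k. x $ k = 0}"
definition box :: "real^('n::{finite,linorder}) \<Rightarrow> bool" where
  "box x \<longleftrightarrow> (\<forall>k. real_of_int (\<sigma>2 k) * x $ k \<le> 0 \<and> \<bar>x $ k\<bar> \<le> 1)"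
definition adm :: "'n set \<Rightarrow> bool" where
  "adm J \<longleftrightarrow> remdups_adj (map \<sigma>2 (sorted_list_of_set J)) = \<sigma>1"
definition LL :: "(real^('n::{finite,linorder})) set" where "LL = {x. box x \<and> adm (Z x)}"

lemma LL_eq: "LL = {x :: real^('n::{finite,linorder}).
           (\<forall>k. real_of_int (\<sigma>2 k) * x $ k \<le> 0 \<and> \<bar>x $ k\<bar> \<le> 1) \<and>
           reduced_string \<sigma>1 (map \<sigma>2 (sorted_list_of_set {k. x $ k = 0}))}"
proof -
  have r: "reduced_string \<sigma>1 (map \<sigma>2 l) \<longleftrightarrow> remdups_adj (map \<sigma>2 l) = \<sigma>1" for l
    by (rule reduced_iff[OF _ ss]) (use sig in auto)
  show ?thesis unfolding LL_def box_def adm_def Z_def by (simp only: r)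
qed

lemma sig_ne0: "real_of_int (\<sigma>2 k) \<noteq> 0" using sig[of k] by auto
lemma sig_sq: "real_of_int (\<sigma>2 k) * real_of_int (\<sigma>2 k) = 1" using sig[of k] by auto

lemma step:
  assumes S: "S \<subseteq> LL" and cg: "continuous_on S g"
    and gx: "\<And>x. x \<in> S \<Longrightarrow> g x \<in> LL \<and> (Z x \<subseteq> Z (g x) \<or> Z (g x) \<subseteq> Z x)"
  shows "homotopic_with_canon (\<lambda>z. True) S LL id g"
proof (rule homotopic_with_linear[OF continuous_on_id' cg])
  fix x assume x: "x \<in> S"
  then have xL: "x \<in> LL" and gL: "g x \<in> LL" and zz: "Z x \<subseteq> Z (g x) \<or> Z (g x) \<subseteq> Z x"
    using S gx by auto
  show "closed_segment (id x) (g x) \<subseteq> LL"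
  proof
    fix y assume "y \<in> closed_segment (id x) (g x)"
    then obtain u where u: "0 \<le> u" "u \<le> 1" and y: "y = (1 - u) *\<^sub>R x + u *\<^sub>R g x"
      unfolding closed_segment_def by auto
    have yk: "y $ k = (1 - u) * x $ k + u * g x $ k" for k using y by simp
    have bx: "box x" "box (g x)" using xL gL unfolding LL_def by auto
    have "box y" unfolding box_def
    proof
      fix k
      have a1: "real_of_int (\<sigma>2 k) * x $ k \<le> 0" "\<bar>x $ k\<bar> \<le> 1"
        "real_of_int (\<sigma>2 k) * g x $ k \<le> 0" "\<bar>g x $ k\<bar> \<le> 1" using bx unfolding box_def by auto
      have "real_of_int (\<sigma>2 k) * y $ k = (1 - u) * (real_of_int (\<sigma>2 k) * x $ k) + u * (real_of_int (\<sigma>2 k) * g x $ k)"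
        unfolding yk by (simp add: algebra_simps)
      also have "\<dots> \<le> 0" using a1 u by (simp add: add_nonpos_nonpos mult_nonneg_nonpos)
      finally have c1: "real_of_int (\<sigma>2 k) * y $ k \<le> 0" .
      have "\<bar>y $ k\<bar> \<le> (1 - u) * \<bar>x $ k\<bar> + u * \<bar>g x $ k\<bar>"
        unfolding yk using u by (metis abs_mult abs_of_nonneg abs_triangle_ineq diff_ge_0_iff_ge)
      also have "\<dots> \<le> (1 - u) * 1 + u * 1" using a1 u by (intro add_mono mult_left_mono) auto
      finally show "real_of_int (\<sigma>2 k) * y $ k \<le> 0 \<and> \<bar>y $ k\<bar> \<le> 1" using c1 by simp
    qed
    moreover have "adm (Z y)"
    proof (cases "u = 0 \<or> u = 1")
      case True then show ?thesis using y xL gL unfolding LL_def by auto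
    next
      case False
      then have u': "0 < u" "u < 1" using u by auto
      have "Z y = Z x \<inter> Z (g x)"
      proof -
        have "y $ k = 0 \<longleftrightarrow> x $ k = 0 \<and> g x $ k = 0" for k
          unfolding yk using bx unfolding box_def
          by (intro zero_mix[OF _ _ sig_ne0 u']) auto
        then show ?thesis unfolding Z_def by auto
      qed
      then have "Z y = Z x \<or> Z y = Z (g x)" using zz by auto
      then show ?thesis using xL gL unfolding LL_def by auto
    qed
    ultimately show "y \<in> LL" unfolding LL_def by auto
  qed
qed


fun ee :: "nat \<Rightarrow> 'n" where
  "ee 0 = Min {k. \<sigma>2 k = \<sigma>1 ! 0}"
| "ee (Suc j) = Min {k. ee j < k \<and> \<sigma>2 k = \<sigma>1 ! Suc j}"

lemma witness: obtains zs where "sorted_wrt (<) zs" "\<sigma>1 = map \<sigma>2 zs"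
proof -
  obtain zs where z: "subseq zs (sorted_list_of_set (UNIV::'n set))" "\<sigma>1 = map \<sigma>2 zs"
    using subseq_map_ex[OF sub] by blast
  have "sorted_wrt (<) zs" using subseq_sorted_wrt[OF z(1)] strict_sorted_list_of_set by blast
  then show ?thesis using that z by blast
qed

lemma ee_props:
  assumes zs: "sorted_wrt (<) zs" "\<sigma>1 = map \<sigma>2 zs"
  shows "j < length \<sigma>1 \<Longrightarrow> \<sigma>2 (ee j) = \<sigma>1 ! j \<and> ee j \<le> zs ! j \<and> (\<forall>i. j = Suc i \<longrightarrow> ee i < ee j)"
proof (induction j)
  case 0
  have "\<sigma>2 (zs ! 0) = \<sigma>1 ! 0" using 0 zs(2) by simp
  then have "zs ! 0 \<in> {k. \<sigma>2 k = \<sigma>1 ! 0}" by simp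
  then show ?case using Min_in[of "{k. \<sigma>2 k = \<sigma>1 ! 0}"] Min_le[of "{k. \<sigma>2 k = \<sigma>1 ! 0}"]
    by auto
next
  case (Suc j)
  have lz: "length zs = length \<sigma>1" using zs(2) by simp
  have IH: "ee j \<le> zs ! j" using Suc by simp
  have "zs ! j < zs ! Suc j" using sorted_wrt_nth_less[OF zs(1)] Suc.prems lz by simp
  moreover have "\<sigma>2 (zs ! Suc j) = \<sigma>1 ! Suc j" using Suc.prems zs(2) by simp
  ultimately have P: "ee j < zs ! Suc j \<and> \<sigma>2 (zs ! Suc j) = \<sigma>1 ! Suc j" using IH by simp
  then have P': "zs ! Suc j \<in> {k. ee j < k \<and> \<sigma>2 k = \<sigma>1 ! Suc j}" by simp
  define S where "S = {k. ee j < k \<and> \<sigma>2 k = \<sigma>1 ! Suc j}"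
  have fS: "finite S" by simp
  have PS: "zs ! Suc j \<in> S" using P' unfolding S_def .
  have M: "Min S \<in> S" using Min_in[OF fS] PS by blast
  have M2: "Min S \<le> zs ! Suc j" using Min_le[OF fS PS] .
  have "ee (Suc j) = Min S" unfolding S_def by simp
  moreover have "ee j < Min S \<and> \<sigma>2 (Min S) = \<sigma>1 ! Suc j" using M unfolding S_def by simp
  ultimately show ?case using M2 by simp
qed

lemma ee_sig: "j < length \<sigma>1 \<Longrightarrow> \<sigma>2 (ee j) = \<sigma>1 ! j"
  using ee_props witness by metis

lemma ee_lt: "Suc j < length \<sigma>1 \<Longrightarrow> ee j < ee (Suc j)"
  using ee_props witness by metis

lemma ee_least: "j < length \<sigma>1 \<Longrightarrow> \<sigma>2 k = \<sigma>1 ! j \<Longrightarrow> (j = 0 \<or> ee (j - 1) < k) \<Longrightarrow> ee j \<le> k"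
  by (cases j) (auto intro: Min_le)

lemma ee_mono: "b < length \<sigma>1 \<Longrightarrow> a < b \<Longrightarrow> ee a < ee b"
proof (induction b)
  case 0 then show ?case by simp
next
  case (Suc b)
  then have "ee b < ee (Suc b)" using ee_lt by simp
  then show ?case using Suc by (cases "a = b") auto
qed

lemma ee_sorted: "i \<le> length \<sigma>1 \<Longrightarrow> sorted_wrt (<) (map ee [0..<i])"
  unfolding sorted_wrt_iff_nth_less by (auto intro: ee_mono)

lemma ee_map: "i \<le> length \<sigma>1 \<Longrightarrow> map \<sigma>2 (map ee [0..<i]) = take i \<sigma>1"
  by (rule nth_equalityI) (auto simp: ee_sig)

lemma take_rd: "remdups_adj (take i \<sigma>1) = take i \<sigma>1"
  using distinct_adj_altdef distinct_adj_take sign_string_distinct_adj[OF ss] by blast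

lemma rd_rest:
  assumes i: "i \<le> length \<sigma>1" and a: "adm J"
    and sl: "sorted_list_of_set J = map ee [0..<i] @ ys"
    and c: "0 < i \<and> ys \<noteq> [] \<longrightarrow> \<sigma>2 (hd ys) \<noteq> \<sigma>1 ! (i - 1)"
  shows "remdups_adj (map \<sigma>2 ys) = drop i \<sigma>1"
proof -
  have m: "map \<sigma>2 (sorted_list_of_set J) = take i \<sigma>1 @ map \<sigma>2 ys" using sl ee_map[OF i] by simp
  have "take i \<sigma>1 = [] \<or> map \<sigma>2 ys = [] \<or> last (take i \<sigma>1) \<noteq> hd (map \<sigma>2 ys)"
  proof (cases "i = 0 \<or> ys = []")
    case True then show ?thesis by auto
  next
    case False
    have ne: "take i \<sigma>1 \<noteq> []" using False i by auto
    have "last (take i \<sigma>1) = take i \<sigma>1 ! (i - 1)" using last_conv_nth[OF ne] i by (simp add: min_def)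
    also have "\<dots> = \<sigma>1 ! (i - 1)" using False by simp
    finally have "last (take i \<sigma>1) = \<sigma>1 ! (i - 1)" .
    then show ?thesis using c False by (cases ys) auto
  qed
  then have "\<sigma>1 = take i \<sigma>1 @ remdups_adj (map \<sigma>2 ys)"
    using a m remdups_adj_append' take_rd unfolding adm_def by metis
  then show ?thesis by (metis append_take_drop_id same_append_eq)
qed

definition T :: "nat \<Rightarrow> (real^('n::{finite,linorder})) set" where
  "T i = {x\<in>LL. \<exists>ys. sorted_list_of_set (Z x) = map ee [0..<i] @ ys \<and>
                     (0 < i \<and> ys \<noteq> [] \<longrightarrow> \<sigma>2 (hd ys) \<noteq> \<sigma>1 ! (i - 1))}"
definition U :: "nat \<Rightarrow> (real^('n::{finite,linorder})) set" where
  "U i = {x\<in>LL. \<exists>ys. sorted_list_of_set (Z x) = map ee [0..<Suc i] @ ys}"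

lemma fin_Z[simp]: "finite (Z x)" by simp

definition gup :: "nat \<Rightarrow> real^('n::{finite,linorder}) \<Rightarrow> real^('n::{finite,linorder})" where
  "gup i x = (\<chi> k. if k = ee i then 0 else x $ k)"

lemma gup_cont: "continuous_on S (gup i)"
  unfolding gup_def
proof (intro continuous_on_vec_lambda)
  fix k
  show "continuous_on S (\<lambda>x. if k = ee i then 0 else x $ k)"
    by (cases "k = ee i") (simp_all add: continuous_intros)
qed

lemma up:
  assumes i: "i < length \<sigma>1" and x: "x \<in> T i"
  shows "gup i x \<in> U i \<and> Z x \<subseteq> Z (gup i x)"
proof -
  let ?P = "map ee [0..<i]"
  obtain ys where sl: "sorted_list_of_set (Z x) = ?P @ ys"
    and c: "0 < i \<and> ys \<noteq> [] \<longrightarrow> \<sigma>2 (hd ys) \<noteq> \<sigma>1 ! (i - 1)" and xL: "x \<in> LL"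
    using x unfolding T_def by blast
  have a: "adm (Z x)" "box x" using xL unfolding LL_def by auto
  have rd: "remdups_adj (map \<sigma>2 ys) = drop i \<sigma>1" using rd_rest[OF _ a(1) sl c] i by simp
  then have ysne: "ys \<noteq> []" using i by auto
  have hy: "\<sigma>2 (hd ys) = \<sigma>1 ! i"
    using arg_cong[OF rd, of hd] ysne i by (simp add: hd_map hd_drop_conv_nth)
  have sw: "sorted_wrt (<) (?P @ ys)" using sl strict_sorted_list_of_set by metis
  have setZ: "set (?P @ ys) = Z x" using sl by (metis fin_Z set_sorted_list_of_set)
  have gt: "\<forall>a\<in>set ?P. \<forall>b\<in>set ys. a < b" using sw by (simp add: sorted_wrt_append)
  have "0 < i \<longrightarrow> ee (i - 1) < hd ys" using gt ysne by (cases i) auto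
  then have le: "ee i \<le> hd ys" using ee_least[OF i hy] by auto
  have Zg: "Z (gup i x) = insert (ee i) (Z x)" unfolding Z_def gup_def by auto
  have bg: "box (gup i x)" using a(2) unfolding box_def gup_def by auto
  have Pe: "map ee [0..<Suc i] = ?P @ [ee i]" by simp
  show ?thesis
  proof (cases "ee i = hd ys")
    case True
    then have "ee i \<in> Z x" using setZ ysne by auto
    then have "Z (gup i x) = Z x" using Zg by auto
    moreover have "sorted_list_of_set (Z x) = map ee [0..<Suc i] @ tl ys"
      using sl True ysne Pe by (cases ys) auto
    ultimately show ?thesis using bg a unfolding U_def LL_def by auto
  next
    case False
    then have lt: "ee i < hd ys" using le by simp
    have sw2: "sorted_wrt (<) ys" using sw by (simp add: sorted_wrt_append)
    have "\<forall>b\<in>set ys. hd ys \<le> b" using sw2 ysne by (cases ys) (auto intro: less_imp_le)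
    then have gt2: "\<forall>b\<in>set ys. ee i < b" using lt by force
    have gt1: "\<forall>a\<in>set ?P. a < ee i" using ee_mono i by auto
    have sw3: "sorted_wrt (<) (?P @ ee i # ys)"
      using sw gt1 gt2 by (auto simp: sorted_wrt_append)
    have sl2: "sorted_list_of_set (Z (gup i x)) = ?P @ ee i # ys"
      using sls_eq[OF sw3] setZ Zg by simp
    obtain y ys' where ys: "ys = y # ys'" using ysne by (cases ys) auto
    have "map \<sigma>2 (?P @ ee i # ys) = map \<sigma>2 ?P @ \<sigma>1 ! i # \<sigma>1 ! i # map \<sigma>2 ys'"
      using ys hy ee_sig[OF i] by simp
    moreover have "map \<sigma>2 (?P @ ys) = map \<sigma>2 ?P @ \<sigma>1 ! i # map \<sigma>2 ys'"
      using ys hy by simp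
    ultimately have "adm (Z (gup i x))" using a(1) sl sl2 remdups_dup unfolding adm_def by metis
    then show ?thesis using bg sl2 Pe Zg unfolding U_def LL_def by auto
  qed
qed

definition D :: "nat \<Rightarrow> 'n \<Rightarrow> 'n set" where "D i k = {j. ee i < j \<and> j < k \<and> \<sigma>2 j \<noteq> \<sigma>1 ! i}"

lemma cont_if_const: "continuous_on S f \<Longrightarrow> continuous_on S g \<Longrightarrow> continuous_on S (\<lambda>x. if c then f x else g x)"
  by (cases c) simp_all

definition gdn :: "nat \<Rightarrow> real^('n::{finite,linorder}) \<Rightarrow> real^('n::{finite,linorder})" where
  "gdn i x = (\<chi> k. if ee i < k \<and> \<sigma>2 k = \<sigma>1 ! i
      then - real_of_int (\<sigma>2 k) * max \<bar>x $ k\<bar> (\<Prod>j\<in>D i k. \<bar>x $ j\<bar>) else x $ k)"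

lemma gdn_cont: "continuous_on S (gdn i)"
  unfolding gdn_def
proof (intro continuous_on_vec_lambda)
  fix k
  show "continuous_on S (\<lambda>x. if ee i < k \<and> \<sigma>2 k = \<sigma>1 ! i
      then - real_of_int (\<sigma>2 k) * max \<bar>x $ k\<bar> (\<Prod>j\<in>D i k. \<bar>x $ j\<bar>) else x $ k)"
    by (rule cont_if_const) (intro continuous_intros)+
qed

lemma gdn_zero: "gdn i x $ k = 0 \<longleftrightarrow> x $ k = 0 \<and> (ee i < k \<and> \<sigma>2 k = \<sigma>1 ! i \<longrightarrow> (\<exists>j\<in>D i k. x $ j = 0))"
proof (cases "ee i < k \<and> \<sigma>2 k = \<sigma>1 ! i")
  case True
  have p: "0 \<le> (\<Prod>j\<in>D i k. \<bar>x $ j\<bar>)" by (simp add: prod_nonneg)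
  have m0: "max a q = 0 \<longleftrightarrow> a = 0 \<and> q = 0" if "0 \<le> a" "0 \<le> q" for a q :: real
    using that by (auto simp: max_def)
  have "max \<bar>x $ k\<bar> (\<Prod>j\<in>D i k. \<bar>x $ j\<bar>) = 0 \<longleftrightarrow> \<bar>x $ k\<bar> = 0 \<and> (\<Prod>j\<in>D i k. \<bar>x $ j\<bar>) = 0"
    using m0[OF _ p] by simp
  also have "\<dots> \<longleftrightarrow> x $ k = 0 \<and> (\<exists>j\<in>D i k. x $ j = 0)" by simp
  finally have mm: "max \<bar>x $ k\<bar> (\<Prod>j\<in>D i k. \<bar>x $ j\<bar>) = 0 \<longleftrightarrow> x $ k = 0 \<and> (\<exists>j\<in>D i k. x $ j = 0)" .
  have "gdn i x $ k = - real_of_int (\<sigma>2 k) * max \<bar>x $ k\<bar> (\<Prod>j\<in>D i k. \<bar>x $ j\<bar>)"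
    using True unfolding gdn_def by simp
  then show ?thesis using True sig_ne0[of k] mm by simp
next
  case False
  have "gdn i x $ k = x $ k" using False unfolding gdn_def by auto
  then show ?thesis using False by auto
qed

lemma gdn_box: "box x \<Longrightarrow> box (gdn i x)"
  unfolding box_def
proof (intro allI)
  fix k assume b: "\<forall>k. real_of_int (\<sigma>2 k) * x $ k \<le> 0 \<and> \<bar>x $ k\<bar> \<le> 1"
  show "real_of_int (\<sigma>2 k) * gdn i x $ k \<le> 0 \<and> \<bar>gdn i x $ k\<bar> \<le> 1"
  proof (cases "ee i < k \<and> \<sigma>2 k = \<sigma>1 ! i")
    case True
    let ?v = "max \<bar>x $ k\<bar> (\<Prod>j\<in>D i k. \<bar>x $ j\<bar>)"
    have p: "(\<Prod>j\<in>D i k. \<bar>x $ j\<bar>) \<le> 1" using b by (intro prod_le_1) auto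
    have v: "0 \<le> ?v" "?v \<le> 1" using p b by auto
    have g: "gdn i x $ k = - real_of_int (\<sigma>2 k) * ?v" using True unfolding gdn_def by simp
    have "real_of_int (\<sigma>2 k) * gdn i x $ k = - ?v" unfolding g
      using sig_sq[of k] by (simp add: algebra_simps)
    moreover have "\<bar>gdn i x $ k\<bar> = ?v" unfolding g using sig[of k] v by (auto simp: abs_mult)
    ultimately show ?thesis using v by simp
  next
    case False
    have "gdn i x $ k = x $ k" using False unfolding gdn_def by auto
    then show ?thesis using b by simp
  qed
qed

lemma down:
  assumes i: "i < length \<sigma>1" and x: "x \<in> U i"
  shows "gdn i x \<in> T (Suc i) \<and> Z (gdn i x) \<subseteq> Z x"
proof -
  let ?P = "map ee [0..<i]" and ?P' = "map ee [0..<Suc i]"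
  let ?Q = "\<lambda>k. \<sigma>2 k = \<sigma>1 ! i"
  obtain ys where sl: "sorted_list_of_set (Z x) = ?P' @ ys" and xL: "x \<in> LL"
    using x unfolding U_def by blast
  have a: "adm (Z x)" "box x" using xL unfolding LL_def by auto
  have sw: "sorted_wrt (<) (?P' @ ys)" using sl strict_sorted_list_of_set by metis
  have setZ: "set (?P' @ ys) = Z x" using sl by (metis fin_Z set_sorted_list_of_set)
  have gt: "\<forall>a\<in>set ?P'. \<forall>b\<in>set ys. a < b" using sw by (simp add: sorted_wrt_append)
  have Pe: "?P' = ?P @ [ee i]" by simp
  have leP: "\<forall>a\<in>set ?P'. a \<le> ee i" using ee_mono i by (auto simp: le_less)
  have gtys: "\<forall>b\<in>set ys. ee i < b" using gt by simp
  have sw2: "sorted_wrt (<) ys" using sw by (simp add: sorted_wrt_append)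
  let ?dw = "dropWhile ?Q ys" and ?tw = "takeWhile ?Q ys"
  have dws: "set ?dw \<subseteq> set ys" by (auto dest: set_dropWhileD)
  have "sorted_wrt (<) (?tw @ ?dw)" using sw2 by simp
  then have swd: "sorted_wrt (<) ?dw" by (simp add: sorted_wrt_append)
  have swP: "sorted_wrt (<) ?P'" using sw by (simp add: sorted_wrt_append)
  have "\<forall>a\<in>set ?P'. \<forall>b\<in>set ?dw. a < b" using gt dws by blast
  then have sw3: "sorted_wrt (<) (?P' @ ?dw)" using swd swP by (simp add: sorted_wrt_append)
  have Zeq: "Z (gdn i x) = set (?P' @ ?dw)"
  proof (rule set_eqI)
    fix k
    have xz: "x $ j = 0 \<longleftrightarrow> j \<in> set ?P' \<or> j \<in> set ys" for j
    proof -
      have "x $ j = 0 \<longleftrightarrow> j \<in> Z x" unfolding Z_def by simp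
      also have "\<dots> \<longleftrightarrow> j \<in> set (?P' @ ys)" using setZ by simp
      finally show ?thesis by simp
    qed
    have indw: "k \<in> set ?dw \<longleftrightarrow> k \<in> set ys \<and> (\<exists>j\<in>set ys. j \<le> k \<and> \<not> ?Q j)"
      by (rule in_dropWhile_sorted[OF sw2])
    have gz: "k \<in> Z (gdn i x) \<longleftrightarrow> x $ k = 0 \<and> (ee i < k \<and> ?Q k \<longrightarrow> (\<exists>j\<in>D i k. x $ j = 0))"
      unfolding Z_def mem_Collect_eq gdn_zero by simp
    have sa: "k \<in> set (?P' @ ?dw) \<longleftrightarrow> k \<in> set ?P' \<or> k \<in> set ?dw" by simp
    show "k \<in> Z (gdn i x) \<longleftrightarrow> k \<in> set (?P' @ ?dw)"
    proof (cases "k \<le> ee i")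
      case True
      then have "k \<notin> set ys" using gtys by (meson leD)
      then have "k \<notin> set ?dw" using dws by blast
      moreover have "\<not> ee i < k" using True by simp
      ultimately show ?thesis using gz sa xz \<open>k \<notin> set ys\<close> by blast
    next
      case False
      then have ek: "ee i < k" by simp
      then have kP: "k \<notin> set ?P'" using leP by (meson leD)
      have D': "(\<exists>j\<in>D i k. x $ j = 0) \<longleftrightarrow> (\<exists>j\<in>set ys. j < k \<and> \<not> ?Q j)"
      proof
        assume "\<exists>j\<in>D i k. x $ j = 0"
        then obtain j where j: "ee i < j" "j < k" "\<not> ?Q j" "x $ j = 0" unfolding D_def by blast
        then have "j \<notin> set ?P'" using leP by (meson leD)
        then have "j \<in> set ys" using xz j(4) by blast
        then show "\<exists>j\<in>set ys. j < k \<and> \<not> ?Q j" using j by blast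
      next
        assume "\<exists>j\<in>set ys. j < k \<and> \<not> ?Q j"
        then obtain j where j: "j \<in> set ys" "j < k" "\<not> ?Q j" by blast
        then have "ee i < j" "x $ j = 0" using gtys xz by auto
        then show "\<exists>j\<in>D i k. x $ j = 0" using j unfolding D_def by blast
      qed
      have "k \<in> Z (gdn i x) \<longleftrightarrow> k \<in> set ys \<and> (?Q k \<longrightarrow> (\<exists>j\<in>set ys. j < k \<and> \<not> ?Q j))"
        using gz ek D' xz kP by blast
      also have "\<dots> \<longleftrightarrow> k \<in> set ?dw"
        unfolding indw by (metis order.order_iff_strict)
      finally show ?thesis using sa kP by blast
    qed
  qed
  have sl2: "sorted_list_of_set (Z (gdn i x)) = ?P' @ ?dw" using Zeq sls_eq[OF sw3] by simp
  have tw: "\<forall>y\<in>set (map \<sigma>2 ?tw). y = \<sigma>1 ! i" by (auto dest: set_takeWhileD)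
  have e1: "?P' @ ys = ?P @ ee i # (?tw @ ?dw)" by simp
  have e2: "?P' @ ?dw = ?P @ ee i # ?dw" by simp
  have "map \<sigma>2 (?P' @ ys) = map \<sigma>2 ?P @ \<sigma>2 (ee i) # map \<sigma>2 ?tw @ map \<sigma>2 ?dw"
    unfolding e1 by (simp only: map_append list.map)
  moreover have "map \<sigma>2 (?P' @ ?dw) = map \<sigma>2 ?P @ \<sigma>2 (ee i) # map \<sigma>2 ?dw"
    unfolding e2 by (simp only: map_append list.map)
  moreover have "\<sigma>2 (ee i) = \<sigma>1 ! i" using ee_sig[OF i] .
  ultimately have "adm (Z (gdn i x))"
    using a(1) sl sl2 remdups_dups[OF tw] unfolding adm_def by simp
  moreover have "box (gdn i x)" using gdn_box a(2) by blast
  moreover have "?dw \<noteq> [] \<longrightarrow> \<sigma>2 (hd ?dw) \<noteq> \<sigma>1 ! i" using hd_dropWhile by blast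
  moreover have "Z (gdn i x) \<subseteq> Z x" unfolding Z_def gdn_zero by auto
  ultimately show ?thesis using sl2 unfolding T_def LL_def by auto
qed

lemma T0: "T 0 = LL" unfolding T_def by auto
lemma TL: "T i \<subseteq> LL" unfolding T_def by auto
lemma UL: "U i \<subseteq> LL" unfolding U_def by auto

lemma chain: "i \<le> length \<sigma>1 \<Longrightarrow> \<exists>\<phi>. continuous_on LL \<phi> \<and> \<phi> ` LL \<subseteq> T i \<and>
    homotopic_with_canon (\<lambda>z. True) LL LL id \<phi>"
proof (induction i)
  case 0
  show ?case by (intro exI[of _ id]) (auto simp: T0)
next
  case (Suc i)
  have "i \<le> length \<sigma>1" using Suc.prems by simp
  then obtain \<phi> where c\<phi>: "continuous_on LL \<phi>" and i\<phi>: "\<phi> ` LL \<subseteq> T i"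
    and h\<phi>: "homotopic_with_canon (\<lambda>z. True) LL LL id \<phi>" using Suc.IH by blast
  have i: "i < length \<sigma>1" using Suc by simp
  have h1: "homotopic_with_canon (\<lambda>z. True) (T i) LL id (gup i)"
    by (rule step[OF TL gup_cont]) (use up[OF i] UL in blast)
  have h1': "homotopic_with_canon (\<lambda>z. True) LL LL (id \<circ> \<phi>) (gup i \<circ> \<phi>)"
    by (rule homotopic_with_compose_continuous_right[where p="\<lambda>z. True", OF h1 c\<phi>])
       (use i\<phi> in blast)
  have h2: "homotopic_with_canon (\<lambda>z. True) (U i) LL id (gdn i)"
    by (rule step[OF UL gdn_cont]) (use down[OF i] TL in blast)
  have c2: "continuous_on LL (gup i \<circ> \<phi>)"
    by (rule continuous_on_compose[OF c\<phi> gup_cont])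
  have i2: "(gup i \<circ> \<phi>) ` LL \<subseteq> U i" using i\<phi> up[OF i] by auto
  have h2': "homotopic_with_canon (\<lambda>z. True) LL LL (id \<circ> (gup i \<circ> \<phi>)) (gdn i \<circ> (gup i \<circ> \<phi>))"
    by (rule homotopic_with_compose_continuous_right[where p="\<lambda>z. True", OF h2 c2])
       (use i2 in blast)
  have "homotopic_with_canon (\<lambda>z. True) LL LL id (gdn i \<circ> (gup i \<circ> \<phi>))"
    using homotopic_with_trans[OF homotopic_with_trans[OF h\<phi> h1'[unfolded id_comp]] h2'[unfolded id_comp]] .
  moreover have "continuous_on LL (gdn i \<circ> (gup i \<circ> \<phi>))"
    by (rule continuous_on_compose[OF c2 gdn_cont])
  moreover have "(gdn i \<circ> (gup i \<circ> \<phi>)) ` LL \<subseteq> T (Suc i)" using i2 down[OF i] by auto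
  ultimately show ?case by blast
qed

definition cc :: "real^('n::{finite,linorder})" where
  "cc = (\<chi> k. if k \<in> ee ` {..<length \<sigma>1} then 0 else - real_of_int (\<sigma>2 k))"

lemma Z_cc: "Z cc = ee ` {..<length \<sigma>1}"
  unfolding Z_def cc_def using sig_ne0 by auto

lemma cc_L: "cc \<in> LL"
proof -
  have se: "set (map ee [0..<length \<sigma>1]) = ee ` {..<length \<sigma>1}" by auto
  have "sorted_list_of_set (Z cc) = map ee [0..<length \<sigma>1]"
    unfolding Z_cc se[symmetric] by (rule sls_eq[OF ee_sorted]) simp
  then have "adm (Z cc)" unfolding adm_def using ee_map[of "length \<sigma>1"] take_rd[of "length \<sigma>1"] by simp
  moreover have "box cc" unfolding box_def cc_def
  proof
    fix k
    show "real_of_int (\<sigma>2 k) * (\<chi> k. if k \<in> ee ` {..<length \<sigma>1} then 0 else - real_of_int (\<sigma>2 k)) $ k \<le> 0 \<and>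
        \<bar>(\<chi> k. if k \<in> ee ` {..<length \<sigma>1} then 0 else - real_of_int (\<sigma>2 k)) $ k\<bar> \<le> 1"
      using sig[of k] by auto
  qed
  ultimately show ?thesis unfolding LL_def by simp
qed

lemma Tm: "x \<in> T (length \<sigma>1) \<Longrightarrow> Z x = ee ` {..<length \<sigma>1}"
proof -
  assume x: "x \<in> T (length \<sigma>1)"
  then obtain ys where sl: "sorted_list_of_set (Z x) = map ee [0..<length \<sigma>1] @ ys"
    and c: "0 < length \<sigma>1 \<and> ys \<noteq> [] \<longrightarrow> \<sigma>2 (hd ys) \<noteq> \<sigma>1 ! (length \<sigma>1 - 1)" and xL: "x \<in> LL"
    unfolding T_def by blast
  have "remdups_adj (map \<sigma>2 ys) = []" using rd_rest[OF _ _ sl c] xL unfolding LL_def by simp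
  then have "ys = []" by simp
  then show ?thesis using sl by (metis append_Nil2 fin_Z set_sorted_list_of_set set_map set_upt atLeast0LessThan)
qed

lemma contractible_LL: "contractible LL"
proof -
  obtain \<phi> where c\<phi>: "continuous_on LL \<phi>" and i\<phi>: "\<phi> ` LL \<subseteq> T (length \<sigma>1)"
    and h\<phi>: "homotopic_with_canon (\<lambda>z. True) LL LL id \<phi>" using chain by blast
  have h3: "homotopic_with_canon (\<lambda>z. True) (T (length \<sigma>1)) LL id (\<lambda>_. cc)"
    by (rule step[OF TL continuous_on_const]) (use cc_L Tm Z_cc in auto)
  have h3': "homotopic_with_canon (\<lambda>z. True) LL LL (id \<circ> \<phi>) ((\<lambda>_. cc) \<circ> \<phi>)"
    by (rule homotopic_with_compose_continuous_right[where p="\<lambda>z. True", OF h3 c\<phi>])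
       (use i\<phi> in blast)
  have "(\<lambda>_. cc) \<circ> \<phi> = (\<lambda>_. cc)" by (simp add: comp_def)
  then have "homotopic_with_canon (\<lambda>z. True) LL LL id (\<lambda>_. cc)"
    using homotopic_with_trans[OF h\<phi> h3'[unfolded id_comp]] by simp
  then show ?thesis unfolding contractible_def by blast
qed

end

theorem lemma1p15:
  fixes \<sigma>2 :: "'n::{finite,linorder} \<Rightarrow> int" and \<sigma>1 :: "int list"
  assumes "ext_string (map \<sigma>2 (sorted_list_of_set UNIV))"
    and "sign_string \<sigma>1"
    and "subseq \<sigma>1 (map \<sigma>2 (sorted_list_of_set UNIV))"
  shows "contractible {x :: real^('n::{finite,linorder}).
           (\<forall>k. real_of_int (\<sigma>2 k) * x $ k \<le> 0 \<and> \<bar>x $ k\<bar> \<le> 1) \<and>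
           reduced_string \<sigma>1 (map \<sigma>2 (sorted_list_of_set {k. x $ k = 0}))}"
proof -
  have "\<And>k. \<sigma>2 k \<in> {-1, 1}" using assms(1) unfolding ext_string_def by auto
  then interpret L15 \<sigma>2 \<sigma>1 using assms(2,3) by unfold_locales auto
  show ?thesis using contractible_LL LL_eq by simp
qed

end
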